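(* Let $\alpha>0$. The convex hull of $$\left\{\left(\frac{p_2(\mathbf x)}{\alpha^2},\frac{p_3(\mathbf x)}{\alpha^3}\right):\ \mathbf x\in\mathbf X,\ p_1(\mathbf x)=\alpha\right\}$$ is equal to the convex hull of $\{(1/m,1/m^2): m\in\mathbb{N}^+\}$.
   Context: $\mathbf X$ is the set of infinite sequences $\mathbf x=(x_1,x_2,\dots)$ of reals with $x_1\ge x_2\ge\cdots\ge0$ (those with $p_1(\mathbf x)=\alpha$ finite are considered). $p_j(\mathbf x)=\sum_i x_i^j$ denotes the $j$-th power sum. *)

theory Defs
  imports "HOL-Analysis.Analysis"
begin

text \<open>The set X: non-increasing, nonnegative real sequences (indexed from 0)
  with finite p_1, i.e. summable.\<close>
definition seqX :: "(nat \<Rightarrow> real) set" where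
  "seqX = {x. (\<forall>i. x (Suc i) \<le> x i) \<and> (\<forall>i. 0 \<le> x i) \<and> summable x}"

definition psum :: "nat \<Rightarrow> (nat \<Rightarrow> real) \<Rightarrow> real" where
  "psum j x = (\<Sum>i. x i ^ j)"

end

theory Submission
  imports Defs
begin

definition HH :: "nat \<Rightarrow> real \<Rightarrow> real" where
  "HH m x = x * (real m * x - 1) * ((real m + 1) * x - 1)"

lemma HH_merge: "HH m (x + y) - HH m x - HH m y
   = x * y * (3 * real m * (real m + 1) * (x + y) - 2 * (2 * real m + 1))"
  unfolding HH_def by (simp add: algebra_simps power2_eq_square)

lemma HH_tangent: "HH m x - HH m u - (3 * real m * (real m + 1) * u^2 - 2 * (2 * real m + 1) * u + 1) * (x - u)
   = (x - u)^2 * (real m * (real m + 1) * (x + 2 * u) - (2 * real m + 1))"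
  unfolding HH_def by (simp add: algebra_simps power2_eq_square)

lemma HH_km: "real m * HH m u + HH m (1 - real m * u) = real m * (real m - 1) * (1 - real m * u) * (1 - (real m + 1) * u)^2"
  unfolding HH_def by (simp add: algebra_simps power2_eq_square)

lemma HH_final:
  fixes m k :: nat and u r :: real
  assumes m: "m \<ge> 1" and k: "k \<ge> 1" and ku: "real k * u + r = 1" and r0: "0 \<le> r"
    and rt: "3 * real m * (real m + 1) * r \<le> 2 * real m + 1"
    and ut: "3 * real m * (real m + 1) * u > 2 * real m + 1"
  shows "0 \<le> real k * HH m u + HH m r"
proof -
  have m1: "real m \<ge> 1" using m by simp
  have "(real m + 1) * r \<le> 1"
  proof -
    have "3 * real m * ((real m + 1) * r) \<le> 3 * real m * 1" using rt m1 by (simp add: algebra_simps)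
    then show ?thesis using m1 by simp
  qed
  moreover have "real m * r \<le> 1" using calculation r0 by (simp add: algebra_simps)
  ultimately have "0 \<le> (real m * r - 1) * ((real m + 1) * r - 1)"
    by (intro mult_nonpos_nonpos) auto
  then have Hr: "0 \<le> HH m r" unfolding HH_def using r0
    by (metis mult.assoc mult_nonneg_nonneg)
  have u0: "u > 0"
  proof (rule ccontr)
    assume "\<not> u > 0"
    then have "3 * real m * (real m + 1) * u \<le> 0" using m1 by (intro mult_nonneg_nonpos) auto
    then show False using ut m1 by linarith
  qed
  show ?thesis
  proof (cases "(real m + 1) * u \<le> 1 \<or> real m * u \<ge> 1")
    case True
    then have "0 \<le> (real m * u - 1) * ((real m + 1) * u - 1)"
    proof
      assume "(real m + 1) * u \<le> 1"
      moreover then have "real m * u \<le> 1" using u0 by (simp add: algebra_simps)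
      ultimately show ?thesis by (intro mult_nonpos_nonpos) auto
    next
      assume "real m * u \<ge> 1"
      moreover then have "(real m + 1) * u \<ge> 1" using u0 by (simp add: algebra_simps)
      ultimately show ?thesis by (intro mult_nonneg_nonneg) auto
    qed
    then have "0 \<le> HH m u" unfolding HH_def using u0
      by (metis mult.assoc mult_nonneg_nonneg less_imp_le)
    then show ?thesis using Hr by simp
  next
    case False
    then have A: "(real m + 1) * u > 1" "real m * u < 1" by auto
    have "real k * u \<le> 1" using ku r0 by simp
    then have "real k * u < (real m + 1) * u" using A by simp
    then have "real k < real m + 1" using u0 by simp
    then have km: "k \<le> m" by simp
    have "k = m"
    proof (rule ccontr)
      assume "k \<noteq> m"
      then have "real k \<le> real m - 1" using km by simp
      then have "real k * u \<le> (real m - 1) * u" using u0 by (simp add: mult_right_mono)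
      then have "r \<ge> 1 - (real m - 1) * u" using ku by simp
      then have "real m * r \<ge> real m * (1 - (real m - 1) * u)" using m1
        by (intro mult_left_mono) auto
      then have "real m * r \<ge> real m - (real m - 1) * (real m * u)"
        by (simp add: algebra_simps)
      moreover have "(real m - 1) * (real m * u) \<le> (real m - 1) * 1" using A m1 by (intro mult_left_mono) auto
      ultimately have "real m * r \<ge> 1" by simp
      moreover have "3 * real m * (real m + 1) * r = 3 * (real m + 1) * (real m * r)" by simp
      ultimately have "3 * real m * (real m + 1) * r \<ge> 3 * (real m + 1) * 1" using m1
        by (metis mult_left_mono of_nat_0_le_iff add_nonneg_nonneg zero_le_one mult_nonneg_nonneg zero_le_numeral)
      then show False using rt m1 by simp
    qed
    then have "r = 1 - real m * u" using ku by simp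
    then have "real k * HH m u + HH m r = real m * (real m - 1) * (1 - real m * u) * (1 - (real m + 1) * u)^2"
      using HH_km \<open>k = m\<close> by simp
    also have "\<dots> \<ge> 0" using m1 A by (intro mult_nonneg_nonneg) auto
    finally show ?thesis .
  qed
qed

lemma HH_fin:
  fixes m :: nat and f :: "'a \<Rightarrow> real"
  assumes m: "m \<ge> 1"
  shows "finite I \<Longrightarrow> (\<forall>i\<in>I. 0 \<le> f i) \<Longrightarrow> sum f I = 1 \<Longrightarrow> 0 \<le> (\<Sum>i\<in>I. HH m (f i))"
proof (induction "card I" arbitrary: I f rule: less_induct)
  case less
  have m1: "real m \<ge> 1" using m by simp
  let ?c = "3 * real m * (real m + 1)"
  have c0: "?c > 0" using m1 by simp
  show ?case
  proof (cases "\<exists>i\<in>I. \<exists>j\<in>I. i \<noteq> j \<and> ?c * (f i + f j) \<le> 2 * (2 * real m + 1)")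
    case True
    then obtain i j where ij: "i\<in>I" "j\<in>I" "i\<noteq>j" "?c * (f i + f j) \<le> 2 * (2 * real m + 1)" by blast
    define I' where "I' = I - {j}"
    define f' where "f' = f(i := f i + f j)"
    have fin': "finite I'" using less by (simp add: I'_def)
    have card: "card I' < card I" unfolding I'_def by (rule card_Diff1_less[OF less(2) ij(2)])
    have i': "i \<in> I'" using ij by (simp add: I'_def)
    have D: "I' - {i} = I - {i,j}" by (auto simp: I'_def)
    have sumI': "sum g I' = g i + sum g (I - {i,j})" for g :: "'a \<Rightarrow> real"
      using sum.remove[OF fin' i', of g] D by simp
    have sumI: "sum g I = g i + g j + sum g (I - {i,j})" for g :: "'a \<Rightarrow> real"
    proof -
      have "sum g I = g i + sum g (I - {i})" using sum.remove[OF less(2) ij(1)] .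
      moreover have "sum g (I - {i}) = g j + sum g (I - {i} - {j})"
        using sum.remove[of "I - {i}" j g] less(2) ij by simp
      moreover have "I - {i} - {j} = I - {i,j}" by auto
      ultimately show ?thesis by simp
    qed
    have eq1: "sum f' (I - {i,j}) = sum f (I - {i,j})" by (rule sum.cong) (auto simp: f'_def)
    have eq2: "(\<Sum>k\<in>I - {i,j}. HH m (f' k)) = (\<Sum>k\<in>I - {i,j}. HH m (f k))"
      by (rule sum.cong) (auto simp: f'_def)
    have nn: "\<forall>k\<in>I'. 0 \<le> f' k" using less(3) ij by (auto simp: f'_def I'_def)
    have s1: "sum f' I' = 1" using sumI'[of f'] sumI[of f] eq1 less(4) by (simp add: f'_def)
    have IH: "0 \<le> (\<Sum>k\<in>I'. HH m (f' k))"
      using less(1)[OF card fin' nn s1] .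
    have "HH m (f i + f j) - HH m (f i) - HH m (f j) \<le> 0"
    proof -
      have "0 \<le> f i * f j" using less(3) ij by simp
      moreover have "3 * real m * (real m + 1) * (f i + f j) - 2 * (2 * real m + 1) \<le> 0" using ij by simp
      ultimately show ?thesis unfolding HH_merge by (simp add: mult_nonneg_nonpos)
    qed
    then have "(\<Sum>k\<in>I'. HH m (f' k)) \<le> (\<Sum>k\<in>I. HH m (f k))"
      using sumI'[of "\<lambda>k. HH m (f' k)"] sumI[of "\<lambda>k. HH m (f k)"] eq2 by (simp add: f'_def)
    then show ?thesis using IH by simp
  next
    case False
    define B where "B = {i\<in>I. ?c * f i > 2 * real m + 1}"
    define Sm where "Sm = I - B"
    have finB: "finite B" "finite Sm" using less(2) by (auto simp: B_def Sm_def)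
    have Sm_small: "\<forall>i\<in>Sm. ?c * f i \<le> 2 * real m + 1" by (auto simp: Sm_def B_def)
    have Sm_sub: "\<forall>i\<in>Sm. \<forall>j\<in>Sm. i = j"
    proof (intro ballI, rule ccontr)
      fix i j assume ij: "i \<in> Sm" "j \<in> Sm" "i \<noteq> j"
      have "?c * f i \<le> 2 * real m + 1" "?c * f j \<le> 2 * real m + 1" using Sm_small ij by auto
      then have "?c * (f i + f j) \<le> 2 * (2 * real m + 1)" by (simp add: distrib_left)
      then show False using False ij by (auto simp: Sm_def)
    qed
    obtain r where r: "sum f Sm = r" "(\<Sum>k\<in>Sm. HH m (f k)) = HH m r" "0 \<le> r" "?c * r \<le> 2 * real m + 1"
    proof (cases "Sm = {}")
      case True
      then show ?thesis using that[of 0] by (simp add: HH_def)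
    next
      case False
      then obtain i0 where "i0 \<in> Sm" by blast
      then have "Sm = {i0}" using Sm_sub by blast
      then show ?thesis using that[of "f i0"] Sm_small less(3) by (auto simp: Sm_def)
    qed
    have IBS: "I = B \<union> Sm" "B \<inter> Sm = {}" by (auto simp: Sm_def B_def)
    have split: "sum g I = sum g B + sum g Sm" for g :: "'a \<Rightarrow> real"
      using IBS finB by (simp add: sum.union_disjoint)
    have sB: "sum f B = 1 - r" using split[of f] less(4) r(1) by simp
    define k where "k = card B"
    have Bne: "B \<noteq> {}"
    proof
      assume "B = {}"
      then have "r = 1" using sB by simp
      moreover have "?c \<ge> 3 * 1 * (real m + 1)" using m1
        by (intro mult_right_mono mult_left_mono) auto
      ultimately show False using r(4) m1 by simp
    qed
    then have k1: "k \<ge> 1" using finB by (simp add: k_def Suc_le_eq card_gt_0_iff)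
    define u where "u = (1 - r) / real k"
    have ku: "real k * u + r = 1" using k1 by (simp add: u_def)
    have "(\<Sum>i\<in>B. (2 * real m + 1) / ?c) < sum f B"
    proof (rule sum_strict_mono[OF finB(1) Bne])
      fix i assume "i \<in> B"
      then have "(2 * real m + 1) < ?c * f i" by (simp add: B_def)
      then show "(2 * real m + 1) / ?c < f i" using c0 by (simp add: pos_divide_less_eq mult.commute)
    qed
    then have "real k * ((2 * real m + 1) / ?c) < real k * u" using sB ku by (simp add: k_def)
    then have "(2 * real m + 1) / ?c < u" using k1
      by (metis mult_less_cancel_left_pos of_nat_0_less_iff less_le_trans zero_less_one)
    then have ut: "?c * u > 2 * real m + 1" using c0 by (simp add: field_simps)
    define Dd where "Dd = 3 * real m * (real m + 1) * u^2 - 2 * (2 * real m + 1) * u + 1"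
    have tang: "HH m u + Dd * (f i - u) \<le> HH m (f i)" if "i \<in> B" for i
    proof -
      have fi: "?c * f i > 2 * real m + 1" using that by (simp add: B_def)
      have "real m * (real m + 1) * (f i + 2 * u) - (2 * real m + 1) \<ge> 0"
        using fi ut by (simp add: algebra_simps)
      then have "0 \<le> (f i - u)^2 * (real m * (real m + 1) * (f i + 2 * u) - (2 * real m + 1))" by simp
      then show ?thesis using HH_tangent[of m "f i" u] unfolding Dd_def by linarith
    qed
    have "(\<Sum>i\<in>B. HH m u + Dd * (f i - u)) \<le> (\<Sum>i\<in>B. HH m (f i))"
      using tang by (rule sum_mono)
    moreover have "(\<Sum>i\<in>B. HH m u + Dd * (f i - u)) = real k * HH m u + Dd * (sum f B - real k * u)"
      by (simp add: sum.distrib sum_distrib_left sum_subtractf k_def algebra_simps)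
    moreover have "sum f B - real k * u = 0" using sB ku by simp
    ultimately have "real k * HH m u \<le> (\<Sum>i\<in>B. HH m (f i))" by simp
    moreover have "0 \<le> real k * HH m u + HH m r"
      using HH_final[OF m k1 ku r(3) r(4) ut] .
    ultimately show ?thesis using split[of "\<lambda>i. HH m (f i)"] r(2) by simp
  qed
qed

lemma seq_basic:
  fixes y :: "nat \<Rightarrow> real"
  assumes nn: "\<And>i. 0 \<le> y i" and sm: "summable y" and s1: "suminf y = 1"
  shows "\<And>i. y i \<le> 1" "summable (\<lambda>i. y i ^ 2)" "summable (\<lambda>i. y i ^ 3)"
proof -
  show le1: "y i \<le> 1" for i
  proof -
    have "y i \<le> sum y {i}" by simp
    also have "\<dots> \<le> suminf y" by (rule sum_le_suminf[OF sm]) (auto simp: nn)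
    finally show ?thesis using s1 by simp
  qed
  show "summable (\<lambda>i. y i ^ 2)"
  proof (rule summable_comparison_test'[OF sm])
    fix n :: nat
    show "norm (y n ^ 2) \<le> y n" using le1[of n] nn[of n]
      by (simp add: power2_eq_square mult_left_le)
  qed
  show "summable (\<lambda>i. y i ^ 3)"
  proof (rule summable_comparison_test'[OF sm])
    fix n :: nat
    have "y n * y n \<le> 1" using le1[of n] nn[of n] by (rule mult_le_one[OF _ _ le1[of n]])
    then have "y n * (y n * y n) \<le> y n" using nn[of n] by (rule mult_left_le)
    then have "y n ^ 3 \<le> y n" by (simp add: power3_eq_cube mult.assoc)
    then show "norm (y n ^ 3) \<le> y n" using nn[of n] by simp
  qed
qed

lemma chord_inf:
  fixes y :: "nat \<Rightarrow> real" and m :: nat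
  assumes m: "m \<ge> 1" and nn: "\<And>i. 0 \<le> y i" and sm: "summable y" and s1: "suminf y = 1"
  shows "0 \<le> real m * (real m + 1) * (\<Sum>i. y i ^ 3) - (2 * real m + 1) * (\<Sum>i. y i ^ 2) + 1"
proof -
  note b = seq_basic[OF nn sm s1]
  define Phi where "Phi N = real m * (real m + 1) * (\<Sum>i<N. y i ^ 3) - (2 * real m + 1) * (\<Sum>i<N. y i ^ 2) * (\<Sum>i<N. y i) + (\<Sum>i<N. y i) ^ 3" for N
  have lim: "Phi \<longlonglongrightarrow> real m * (real m + 1) * (\<Sum>i. y i ^ 3) - (2 * real m + 1) * (\<Sum>i. y i ^ 2) * 1 + 1 ^ 3"
    unfolding Phi_def using summable_LIMSEQ[OF sm, unfolded s1] summable_LIMSEQ[OF b(2)] summable_LIMSEQ[OF b(3)]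
    by (intro tendsto_add tendsto_diff tendsto_mult tendsto_power tendsto_const)
  have pos: "0 \<le> Phi N" for N
  proof (cases "(\<Sum>i<N. y i) = 0")
    case True
    then have "\<forall>i\<in>{..<N}. y i = 0" using nn by (simp add: sum_nonneg_eq_0_iff)
    then show ?thesis by (simp add: Phi_def)
  next
    case False
    define \<sigma> where "\<sigma> = (\<Sum>i<N. y i)"
    have sp: "\<sigma> > 0" using False nn unfolding \<sigma>_def by (simp add: order_le_neq_trans[OF sum_nonneg] )
    have "0 \<le> (\<Sum>i\<in>{..<N}. HH m (y i / \<sigma>))"
      using HH_fin[OF m, of "{..<N}" "\<lambda>i. y i / \<sigma>"] nn sp
      by (simp add: sum_divide_distrib[symmetric] \<sigma>_def[symmetric])
    then have "0 \<le> \<sigma>^3 * (\<Sum>i\<in>{..<N}. HH m (y i / \<sigma>))" using sp by simp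
    also have "\<sigma>^3 * (\<Sum>i\<in>{..<N}. HH m (y i / \<sigma>)) = (\<Sum>i\<in>{..<N}. real m * (real m + 1) * y i ^ 3 - (2 * real m + 1) * \<sigma> * y i ^ 2 + \<sigma>^2 * y i)"
      unfolding sum_distrib_left
    proof (rule sum.cong[OF refl])
      fix i show "\<sigma>^3 * HH m (y i / \<sigma>) = real m * (real m + 1) * y i ^ 3 - (2 * real m + 1) * \<sigma> * y i ^ 2 + \<sigma>^2 * y i"
        using sp unfolding HH_def by (simp add: field_simps power2_eq_square power3_eq_cube)
    qed
    also have "\<dots> = Phi N"
      unfolding Phi_def \<sigma>_def by (simp add: sum.distrib sum_subtractf sum_distrib_left power3_eq_cube power2_eq_square algebra_simps)
    finally show ?thesis .
  qed
  have "0 \<le> real m * (real m + 1) * (\<Sum>i. y i ^ 3) - (2 * real m + 1) * (\<Sum>i. y i ^ 2) * 1 + 1 ^ 3"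
    by (rule LIMSEQ_le_const[OF lim]) (use pos in auto)
  then show ?thesis by simp
qed

lemma seq_facts:
  fixes y :: "nat \<Rightarrow> real"
  assumes nn: "\<And>i. 0 \<le> y i" and sm: "summable y" and s1: "suminf y = 1"
  shows "0 < (\<Sum>i. y i ^ 2)" "(\<Sum>i. y i ^ 2) \<le> 1" "(\<Sum>i. y i ^ 3) \<le> (\<Sum>i. y i ^ 2)"
    "(\<Sum>i. y i ^ 2) < 1 \<Longrightarrow> (\<Sum>i. y i ^ 3) < (\<Sum>i. y i ^ 2)"
proof -
  note b = seq_basic[OF nn sm s1]
  have "\<exists>i. y i > 0"
  proof (rule ccontr)
    assume "\<not> (\<exists>i. y i > 0)"
    then have "y i = 0" for i using nn[of i] by (meson not_less order.antisym)
    then have "y = (\<lambda>_. 0)" by auto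
    then show False using s1 by simp
  qed
  then obtain i where yi: "y i > 0" by blast
  show "0 < (\<Sum>i. y i ^ 2)" by (rule suminf_pos2[OF b(2), of i]) (use yi in auto)
  have sq: "y i ^ 2 \<le> y i" for i using b(1)[of i] nn[of i] by (simp add: power2_eq_square mult_left_le)
  have cu: "y i ^ 3 \<le> y i ^ 2" for i using b(1)[of i] nn[of i]
    by (simp add: power2_eq_square power3_eq_cube mult_left_le mult_nonneg_nonneg)
  show "(\<Sum>i. y i ^ 2) \<le> 1" using suminf_le[OF sq b(2) sm] s1 by simp
  show le: "(\<Sum>i. y i ^ 3) \<le> (\<Sum>i. y i ^ 2)" using suminf_le[OF cu b(3) b(2)] .
  assume lt: "(\<Sum>i. y i ^ 2) < 1"
  show "(\<Sum>i. y i ^ 3) < (\<Sum>i. y i ^ 2)"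
  proof (rule ccontr)
    assume "\<not> ?thesis"
    then have eq: "(\<Sum>i. y i ^ 2 - y i ^ 3) = 0" using le suminf_diff[OF b(2) b(3)] by simp
    have "\<forall>n. y n ^ 2 - y n ^ 3 = 0"
      using iffD1[OF suminf_eq_zero_iff[OF summable_diff[OF b(2) b(3)]] eq] cu by auto
    then have "y n ^ 2 = y n" for n
    proof -
      assume "\<forall>n. y n ^ 2 - y n ^ 3 = 0"
      then have "y n ^ 2 * (1 - y n) = 0" by (simp add: algebra_simps power2_eq_square power3_eq_cube)
      then show ?thesis by (auto simp: power2_eq_square)
    qed
    then have "(\<Sum>i. y i ^ 2) = 1" using s1 by simp
    then show False using lt by simp
  qed
qed

abbreviation TT :: "(real \<times> real) set" where
  "TT \<equiv> {(1 / real m, 1 / (real m) ^ 2) | m :: nat. m \<ge> 1}"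

lemma TT_in: "m \<ge> 1 \<Longrightarrow> (1 / real m, (1 / real m)^2) \<in> convex hull TT"
  by (rule hull_inc, rule CollectI, rule exI[of _ m]) (simp add: power_divide)

lemma seg_T:
  fixes m n :: nat and s :: real
  assumes m: "m \<ge> 1" and n: "n \<ge> 1" and sn: "1/real n \<le> s" and sm: "s \<le> 1/real m"
  shows "(s, (1/real m + 1/real n) * s - 1/(real m * real n)) \<in> convex hull TT"
proof -
  define x y where "x = 1/real m" and "y = 1/real n"
  have px: "(x, x^2) \<in> convex hull TT" using TT_in[OF m] by (simp add: x_def)
  have py: "(y, y^2) \<in> convex hull TT" using TT_in[OF n] by (simp add: y_def)
  have xy: "1/(real m * real n) = x * y" by (simp add: x_def y_def)
  have ys: "y \<le> s" "s \<le> x" using sn sm by (auto simp: x_def y_def)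
  show ?thesis
  proof (cases "x = y")
    case True
    then have "s = x" using ys by simp
    then show ?thesis using px True unfolding xy x_def[symmetric] y_def[symmetric]
      by (simp add: power2_eq_square algebra_simps)
  next
    case False
    then have yx: "y < x" using ys by simp
    define mu where "mu = (s - x) / (y - x)"
    have mu0: "0 \<le> mu" "mu \<le> 1" using ys yx by (auto simp: mu_def field_simps)
    have "(1 - mu) *\<^sub>R (x, x^2) + mu *\<^sub>R (y, y^2) \<in> convex hull TT"
      by (rule convexD[OF convex_convex_hull px py]) (use mu0 in auto)
    moreover have "(1 - mu) *\<^sub>R (x, x^2) + mu *\<^sub>R (y, y^2) = (s, (x + y) * s - x * y)"
    proof -
      have e: "mu * (y - x) = s - x" using yx by (simp add: mu_def)
      have "(1 - mu) * x + mu * y = x + mu * (y - x)" by (simp add: algebra_simps)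
      moreover have "(1 - mu) * x^2 + mu * y^2 = x^2 + (mu * (y - x)) * (y + x)"
        by (simp add: algebra_simps power2_eq_square)
      then have "(1 - mu) * x^2 + mu * y^2 = x^2 + (s - x) * (y + x)" unfolding e .
      then have "(1 - mu) * x^2 + mu * y^2 = (x + y) * s - x * y" by (simp add: algebra_simps power2_eq_square)
      ultimately show ?thesis using e by simp
    qed
    ultimately show ?thesis unfolding xy x_def[symmetric] y_def[symmetric] by simp
  qed
qed

lemma vert:
  fixes C :: "(real \<times> real) set"
  assumes C: "convex C" and a: "(s, L) \<in> C" and b: "(s, u) \<in> C" and Lt: "L \<le> t" and tu: "t \<le> u"
  shows "(s, t) \<in> C"
proof (cases "L = u")
  case True
  then show ?thesis using a Lt tu by simp
next
  case False
  then have Lu: "L < u" using Lt tu by simp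
  define mu where "mu = (t - L) / (u - L)"
  have mu0: "0 \<le> mu" "mu \<le> 1" using Lt tu Lu by (auto simp: mu_def field_simps)
  have "(1 - mu) *\<^sub>R (s, L) + mu *\<^sub>R (s, u) \<in> C"
    by (rule convexD[OF C a b]) (use mu0 in auto)
  moreover have "(1 - mu) *\<^sub>R (s, L) + mu *\<^sub>R (s, u) = (s, t)"
  proof -
    have e: "mu * (u - L) = t - L" using Lu by (simp add: mu_def)
    have "(1 - mu) * L + mu * u = L + mu * (u - L)" by (simp add: algebra_simps)
    then show ?thesis using e by (simp add: algebra_simps)
  qed
  ultimately show ?thesis by simp
qed

lemma aux_frac: "(a::real) \<noteq> 0 \<Longrightarrow> b \<noteq> 0 \<Longrightarrow> (1/a + 1/b) * z - 1/(a*b) = ((a+b) * z - 1)/(a*b)"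
  by (simp add: field_simps)

lemma point_in:
  fixes y :: "nat \<Rightarrow> real"
  assumes nn: "\<And>i. 0 \<le> y i" and sm: "summable y" and s1: "suminf y = 1"
  shows "((\<Sum>i. y i ^ 2), (\<Sum>i. y i ^ 3)) \<in> convex hull TT"
proof -
  define s t where "s = (\<Sum>i. y i ^ 2)" and "t = (\<Sum>i. y i ^ 3)"
  note f = seq_facts[OF nn sm s1, folded s_def t_def]
  define m where "m = nat \<lfloor>1/s\<rfloor>"
  have inv1: "1/s \<ge> 1" using f(1,2) by (simp add: field_simps)
  then have fl: "\<lfloor>1/s\<rfloor> \<ge> 1" by simp
  then have m1: "m \<ge> 1" unfolding m_def by linarith
  have mr: "real m = of_int \<lfloor>1/s\<rfloor>" unfolding m_def by (rule of_nat_nat) (use fl in linarith)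
  have A1: "real m \<le> 1/s" using mr by linarith
  have A2: "1/s < real m + 1" using mr by linarith
  have sle: "s \<le> 1/real m" using A1 f(1) m1 by (simp add: field_simps)
  have sge: "1/real (m+1) \<le> s" using A2 f(1) by (simp add: field_simps)
  have ch: "0 \<le> real m * (real m + 1) * t - (2 * real m + 1) * s + 1"
    using chord_inf[OF m1 nn sm s1] by (simp add: s_def t_def)
  show ?thesis
  proof (cases "s = 1")
    case True
    then have "m = 1" by (simp add: m_def)
    then have "t \<ge> 1" using ch True by simp
    then have "t = 1" using f(3) True by simp
    then show ?thesis using TT_in[of 1] True by (simp add: s_def t_def)
  next
    case False
    then have s1': "s < 1" using f(2) by simp
    then have ts: "t < s" using f(4) by (simp add: s_def t_def)
    have Lp: "(s, (1/real m + 1/real (m+1)) * s - 1/(real m * real (m+1))) \<in> convex hull TT"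
      by (rule seg_T[OF m1 _ sge sle]) simp
    have Lt: "(1/real m + 1/real (m+1)) * s - 1/(real m * real (m+1)) \<le> t"
    proof -
      have "(1/real m + 1/real (m+1)) * s - 1/(real m * real (m+1)) = ((2 * real m + 1) * s - 1) / (real m * (real m + 1))"
      proof -
        have "real m \<noteq> 0" "real (m+1) \<noteq> 0" using m1 by auto
        then have "(1/real m + 1/real (m+1)) * s - 1/(real m * real (m+1)) = ((real m + real (m+1)) * s - 1) / (real m * real (m+1))"
          by (rule aux_frac)
        then show ?thesis by simp
      qed
      also have "\<dots> \<le> t"
      proof -
        have d: "real m * (real m + 1) > 0" using m1 by simp
        have "(2 * real m + 1) * s - 1 \<le> t * (real m * (real m + 1))" using ch by (simp add: algebra_simps)
        then show ?thesis by (subst pos_divide_le_eq[OF d])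
      qed
      finally show ?thesis .
    qed
    obtain M :: nat where M: "max (1/s) ((1 - s)/(s - t)) < real M" using reals_Archimedean2 by blast
    have M1: "M \<ge> 1" using M inv1 by simp
    have Ms: "1/real M \<le> s" using M f(1) M1 by (simp add: field_simps)
    have "(1 - s)/(s - t) < real M" using M by simp
    then have "1 - s < real M * (s - t)" using ts by (simp add: pos_divide_less_eq mult.commute)
    moreover have Mp: "real M > 0" using M1 by simp
    ultimately have "(1 - s) / real M < s - t" by (subst pos_divide_less_eq[OF Mp]) (simp add: mult.commute)
    moreover have "(1/real 1 + 1/real M) * s - 1/(real 1 * real M) = s - (1 - s) / real M"
      by (simp add: algebra_simps add_divide_distrib[symmetric])
    ultimately have Mu: "t \<le> (1/real 1 + 1/real M) * s - 1/(real 1 * real M)" by simp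
    have Up: "(s, (1/real 1 + 1/real M) * s - 1/(real 1 * real M)) \<in> convex hull TT"
      by (rule seg_T[OF _ M1 Ms]) (use s1' in auto)
    have "(s, t) \<in> convex hull TT"
      by (rule vert[OF convex_convex_hull Lp Up Lt Mu])
    then show ?thesis by (simp add: s_def t_def)
  qed
qed

theorem lemmaA4:
  fixes \<alpha> :: real
  assumes "\<alpha> > 0"
  shows "convex hull {(psum 2 x / \<alpha> ^ 2, psum 3 x / \<alpha> ^ 3) | x. x \<in> seqX \<and> psum 1 x = \<alpha>}
       = convex hull {(1 / real m, 1 / (real m) ^ 2) | m :: nat. m \<ge> 1}"
proof (rule antisym)
  have a0: "\<alpha> \<noteq> 0" using assms by simp
  show "convex hull {(psum 2 x / \<alpha> ^ 2, psum 3 x / \<alpha> ^ 3) | x. x \<in> seqX \<and> psum 1 x = \<alpha>} \<subseteq> convex hull TT"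
  proof (rule hull_minimal, rule subsetI)
    fix p assume "p \<in> {(psum 2 x / \<alpha> ^ 2, psum 3 x / \<alpha> ^ 3) | x. x \<in> seqX \<and> psum 1 x = \<alpha>}"
    then obtain x where p: "p = (psum 2 x / \<alpha> ^ 2, psum 3 x / \<alpha> ^ 3)" and x: "x \<in> seqX" "psum 1 x = \<alpha>" by blast
    define y where "y i = x i / \<alpha>" for i
    have xnn: "\<And>i. 0 \<le> x i" and xs: "summable x" using x(1) by (auto simp: seqX_def)
    have nn: "\<And>i. 0 \<le> y i" using xnn assms by (simp add: y_def)
    have sm: "summable y" unfolding y_def using xs by (rule summable_divide)
    have s1: "suminf y = 1" unfolding y_def using suminf_divide[OF xs, of \<alpha>] x(2) a0 by (simp add: psum_def)
    note b = seq_basic[OF nn sm s1]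
    have xy: "x i = \<alpha> * y i" for i using a0 by (simp add: y_def)
    have e2: "psum 2 x = \<alpha>^2 * (\<Sum>i. y i ^ 2)"
      unfolding psum_def xy power_mult_distrib by (rule suminf_mult[OF b(2)])
    have e3: "psum 3 x = \<alpha>^3 * (\<Sum>i. y i ^ 3)"
      unfolding psum_def xy power_mult_distrib by (rule suminf_mult[OF b(3)])
    have "p = ((\<Sum>i. y i ^ 2), (\<Sum>i. y i ^ 3))" using p e2 e3 a0 by simp
    then show "p \<in> convex hull TT" using point_in[OF nn sm s1] by simp
  next
    show "convex (convex hull TT)" by (rule convex_convex_hull)
  qed
  show "convex hull TT \<subseteq> convex hull {(psum 2 x / \<alpha> ^ 2, psum 3 x / \<alpha> ^ 3) | x. x \<in> seqX \<and> psum 1 x = \<alpha>}"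
  proof (rule hull_mono, rule subsetI)
    fix p assume "p \<in> TT"
    then obtain m :: nat where m: "m \<ge> 1" and p: "p = (1 / real m, 1 / (real m) ^ 2)" by blast
    define x where "x i = (if i < m then \<alpha> / real m else 0)" for i
    have fin: "(\<Sum>i. x i ^ j) = real m * (\<alpha> / real m) ^ j" if "j \<ge> 1" for j :: nat
    proof -
      have "(\<Sum>i. x i ^ j) = (\<Sum>i\<in>{..<m}. x i ^ j)"
        by (rule suminf_finite) (use that in \<open>auto simp: x_def\<close>)
      also have "\<dots> = real m * (\<alpha> / real m) ^ j" by (simp add: x_def)
      finally show ?thesis .
    qed
    have "x \<in> seqX"
      unfolding seqX_def
    proof (intro CollectI conjI allI)
      fix i show "x (Suc i) \<le> x i" using assms by (auto simp: x_def)
    next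
      fix i show "0 \<le> x i" using assms by (auto simp: x_def)
    next
      show "summable x" by (rule summable_finite[of "{..<m}"]) (auto simp: x_def)
    qed
    moreover have "psum 1 x = \<alpha>" using fin[of 1] m by (simp add: psum_def)
    moreover have "psum 2 x / \<alpha> ^ 2 = 1 / real m" using fin[of 2] m a0
      by (simp add: psum_def power2_eq_square field_simps)
    moreover have "psum 3 x / \<alpha> ^ 3 = 1 / (real m)^2" using fin[of 3] m a0
      by (simp add: psum_def power2_eq_square power3_eq_cube field_simps)
    ultimately show "p \<in> {(psum 2 x / \<alpha> ^ 2, psum 3 x / \<alpha> ^ 3) | x. x \<in> seqX \<and> psum 1 x = \<alpha>}"
      using p by (intro CollectI exI[of _ x]) simp
  qed
qed

end
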